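(* Let $G$ be a group, $N\trianglelefteq G$ and $\mathcal{H}$ a family of proper subgroups of $G$ that is strongly divided by $N$. Let $\widetilde{\mathcal{H}}$ denote the family of all finite (nonempty) intersections of elements of $\mathcal{H}$. Then $\widetilde{\mathcal{H}}$ is divided by $N$; moreover (1) $\widetilde{\mathcal{H}}^N=\widetilde{\mathcal{H}^N}$, the family of all finite intersections of elements of $\mathcal{H}^N$, and (2) $\overline{\widetilde{\mathcal{H}}}=\widetilde{\overline{\mathcal{H}}}$, the family of all finite intersections of elements of $\overline{\mathcal{H}}$.
   Context: For a family $\mathcal{K}$ of proper subgroups of $G$ write $\mathcal{K}_N=\{H\in\mathcal{K}: HN\neq G\}$ and $\mathcal{K}^N=\{K\in\mathcal{K}: KN=G\}$; for $H\le G$ let $\overline{H}$ be its image in $G/N$ and $\overline{\mathcal{K}}=\{\overline{H}: H\in\mathcal{K}_N\}$. $\mathcal{K}$ is divided by $N$ if (1) $HN\in\mathcal{K}$ for all $H\in\mathcal{K}_N$, and (2) $HN\cap K\in\mathcal{K}$ for all $H\in\mathcal{K}_N$, $K\in\mathcal{K}^N$. $\mathcal{K}$ is strongly divided by $N$ if (1) $N\subseteq H$ for all $H\in\mathcal{K}_N$, and (2) $(K_1\cap\dots\cap K_m)N=G$ for all finite collections $K_1,\dots,K_m\in\mathcal{K}^N$. *)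

theory Defs
  imports "HOL-Algebra.Algebra"
begin

definition fin_inters :: "'a set set \<Rightarrow> 'a set set" where
  "fin_inters \<K> = {\<Inter>F | F. finite F \<and> F \<noteq> {} \<and> F \<subseteq> \<K>}"

definition proper_subgroup_family :: "('a, 'b) monoid_scheme \<Rightarrow> 'a set set \<Rightarrow> bool" where
  "proper_subgroup_family G \<K> = (\<forall>H\<in>\<K>. subgroup H G \<and> H \<noteq> carrier G)"

definition famN :: "('a, 'b) monoid_scheme \<Rightarrow> 'a set \<Rightarrow> 'a set set \<Rightarrow> 'a set set" where
  "famN G N \<K> = {H \<in> \<K>. H <#>\<^bsub>G\<^esub> N \<noteq> carrier G}"

definition famUN :: "('a, 'b) monoid_scheme \<Rightarrow> 'a set \<Rightarrow> 'a set set \<Rightarrow> 'a set set" where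
  "famUN G N \<K> = {K \<in> \<K>. K <#>\<^bsub>G\<^esub> N = carrier G}"

text \<open>Image of a subgroup in G/N (a set of cosets).\<close>
definition bar :: "('a, 'b) monoid_scheme \<Rightarrow> 'a set \<Rightarrow> 'a set \<Rightarrow> 'a set set" where
  "bar G N H = (\<lambda>h. N #>\<^bsub>G\<^esub> h) ` H"

definition bar_fam :: "('a, 'b) monoid_scheme \<Rightarrow> 'a set \<Rightarrow> 'a set set \<Rightarrow> 'a set set set" where
  "bar_fam G N \<K> = bar G N ` famN G N \<K>"

definition divided_by :: "('a, 'b) monoid_scheme \<Rightarrow> 'a set \<Rightarrow> 'a set set \<Rightarrow> bool" where
  "divided_by G N \<K> =
    ((\<forall>H \<in> famN G N \<K>. H <#>\<^bsub>G\<^esub> N \<in> \<K>) \<and>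
     (\<forall>H \<in> famN G N \<K>. \<forall>K \<in> famUN G N \<K>. (H <#>\<^bsub>G\<^esub> N) \<inter> K \<in> \<K>))"

definition strongly_divided_by :: "('a, 'b) monoid_scheme \<Rightarrow> 'a set \<Rightarrow> 'a set set \<Rightarrow> bool" where
  "strongly_divided_by G N \<K> =
    ((\<forall>H \<in> famN G N \<K>. N \<subseteq> H) \<and>
     (\<forall>F. finite F \<and> F \<noteq> {} \<and> F \<subseteq> famUN G N \<K> \<longrightarrow> (\<Inter>F) <#>\<^bsub>G\<^esub> N = carrier G))"

end

theory Submission
  imports Defs
begin

lemma (in group) keyA:
  assumes A: "subgroup A G" "N \<subseteq> A" and N: "subgroup N G" and Cs: "subgroup C G" and C: "C <#> N = carrier G"
  shows "(A \<inter> C) <#> N = A"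
proof
  show "(A \<inter> C) <#> N \<subseteq> A"
    using subgroup.m_closed[OF A(1)] A(2) by (auto simp: set_mult_def)
  show "A \<subseteq> (A \<inter> C) <#> N"
  proof
    fix x assume x: "x \<in> A"
    hence xc: "x \<in> carrier G" using subgroup.subset A by blast
    hence "x \<in> C <#> N" using C by simp
    then obtain c n where cn: "c \<in> C" "n \<in> N" "x = c \<otimes> n" unfolding set_mult_def by blast
    have nc: "n \<in> carrier G" using cn A subgroup.subset by blast
    have cc: "c \<in> carrier G" using cn Cs subgroup.subset by blast
    have "x \<otimes> inv n = c" using cn cc nc by (simp add: m_assoc)
    hence ceq: "c = x \<otimes> inv n" by simp
    have "inv n \<in> A" using A(2) subgroup.m_inv_closed[OF N cn(2)] by blast
    hence "c \<in> A" unfolding ceq using subgroup.m_closed[OF A(1) x] by blast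
    thus "x \<in> (A \<inter> C) <#> N" using cn by (auto simp: set_mult_def)
  qed
qed

lemma (in group) keyB:
  assumes A: "subgroup A G" "N \<subseteq> A" and N: "subgroup N G"
    and Cs: "subgroup C G" and C: "C <#> N = carrier G"
  shows "bar G N (A \<inter> C) = bar G N A"
proof
  show "bar G N (A \<inter> C) \<subseteq> bar G N A" unfolding bar_def by auto
  show "bar G N A \<subseteq> bar G N (A \<inter> C)"
  proof
    fix y assume "y \<in> bar G N A"
    then obtain x where x: "x \<in> A" and y: "y = N #> x" unfolding bar_def by auto
    hence xc: "x \<in> carrier G" using subgroup.subset A by blast
    hence "inv x \<in> C <#> N" using C by simp
    then obtain c n where cn: "c \<in> C" "n \<in> N" "inv x = c \<otimes> n" unfolding set_mult_def by blast
    have nc: "n \<in> carrier G" using cn N subgroup.subset by blast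
    have cc: "c \<in> carrier G" using cn Cs subgroup.subset by blast
    have iv: "inv n \<in> carrier G" "inv c \<in> carrier G" using nc cc by auto
    have "x = inv (inv x)" using xc by (simp only: inv_inv)
    also have "\<dots> = inv n \<otimes> inv c" by (simp only: cn(3) inv_mult_group[OF cc nc])
    finally have e2: "x = inv n \<otimes> inv c" .
    have "n \<otimes> x = (n \<otimes> inv n) \<otimes> inv c" unfolding e2 using nc iv by (simp only: m_assoc)
    also have "\<dots> = inv c" using nc iv by (simp only: r_inv l_one)
    finally have e1: "inv c = n \<otimes> x" by (rule sym)
    have "n \<in> A" using cn(2) A(2) by blast
    hence ic: "inv c \<in> A" unfolding e1 using subgroup.m_closed[OF A(1) _ x] by blast
    have ic2: "inv c \<in> C" using subgroup.m_inv_closed[OF Cs cn(1)] .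
    have Ns: "N \<subseteq> carrier G" using N subgroup.subset by blast
    have inN: "inv n \<in> N" using subgroup.m_inv_closed[OF N cn(2)] .
    have "N #> x = (N #> inv n) #> inv c" unfolding e2
      using coset_mult_assoc[OF Ns iv] by (rule sym)
    also have "N #> inv n = N" using coset_join2[OF iv(1) N inN] .
    finally have eq: "N #> x = N #> inv c" .
    have "inv c \<in> A \<inter> C" using ic ic2 by blast
    hence "N #> inv c \<in> (\<lambda>h. N #> h) ` (A \<inter> C)" by (rule imageI)
    thus "y \<in> bar G N (A \<inter> C)" unfolding bar_def y eq .
  qed
qed

lemma (in group) keyC:
  assumes F: "F \<noteq> {}" and sub: "\<And>H. H \<in> F \<Longrightarrow> subgroup H G \<and> N \<subseteq> H"
    and N: "subgroup N G"
  shows "\<Inter> (bar G N ` F) = bar G N (\<Inter> F)"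
proof
  show "bar G N (\<Inter> F) \<subseteq> \<Inter> (bar G N ` F)" unfolding bar_def by auto
  show "\<Inter> (bar G N ` F) \<subseteq> bar G N (\<Inter> F)"
  proof
    fix c assume c: "c \<in> \<Inter> (bar G N ` F)"
    obtain H0 where H0: "H0 \<in> F" using F by blast
    then obtain h0 where h0: "h0 \<in> H0" "c = N #> h0" using c unfolding bar_def by auto
    have h0c: "h0 \<in> carrier G" using h0 H0 sub subgroup.subset by blast
    have "h0 \<in> H" if H: "H \<in> F" for H
    proof -
      obtain h where h: "h \<in> H" "c = N #> h" using c H unfolding bar_def by auto
      have "h0 \<in> N #> h0" using h0c N by (simp add: rcos_self)
      hence "h0 \<in> N #> h" using h h0 by simp
      then obtain n where n: "n \<in> N" "h0 = n \<otimes> h" unfolding r_coset_def by blast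
      have "n \<in> H" using n(1) sub[OF H] by blast
      thus ?thesis unfolding n(2) using h(1) subgroup.m_closed[of H G n h] sub[OF H] by blast
    qed
    hence "h0 \<in> \<Inter> F" by blast
    hence "N #> h0 \<in> (\<lambda>h. N #> h) ` (\<Inter> F)" by (rule imageI)
    thus "c \<in> bar G N (\<Inter> F)" unfolding bar_def h0(2) .
  qed
qed


lemma (in group) carrier_mult_sub:
  assumes N: "subgroup N G" shows "carrier G <#> N = carrier G"
proof
  show "carrier G <#> N \<subseteq> carrier G"
    using N subgroup.subset by (fastforce simp: set_mult_def)
  show "carrier G \<subseteq> carrier G <#> N"
  proof
    fix x assume x: "x \<in> carrier G"
    have "\<one> \<in> N" using N subgroup.one_closed by blast
    moreover have "x = x \<otimes> \<one>" using x by simp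
    ultimately show "x \<in> carrier G <#> N" using x unfolding set_mult_def by blast
  qed
qed

lemma (in group) decomp:
  assumes N: "subgroup N G" and PS: "proper_subgroup_family G \<H>"
    and SD: "strongly_divided_by G N \<H>"
    and F: "finite F" "F \<noteq> {}" "F \<subseteq> \<H>"
  shows "(F \<subseteq> famUN G N \<H> \<and> (\<Inter>F) <#> N = carrier G) \<or>
    (F \<inter> famN G N \<H> \<noteq> {} \<and> (\<Inter>F) <#> N = \<Inter>(F \<inter> famN G N \<H>)
     \<and> (\<Inter>F) <#> N \<noteq> carrier G
     \<and> bar G N (\<Inter>F) = \<Inter>(bar G N ` (F \<inter> famN G N \<H>))
     \<and> N \<subseteq> \<Inter>(F \<inter> famN G N \<H>))"
proof (cases "F \<inter> famN G N \<H> = {}")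
  case True
  hence sub: "F \<subseteq> famUN G N \<H>" using F(3) unfolding famN_def famUN_def by blast
  hence "(\<Inter>F) <#> N = carrier G" using SD F unfolding strongly_divided_by_def by blast
  thus ?thesis using sub by blast
next
  case False
  define F1 where "F1 = F \<inter> famN G N \<H>"
  define F2 where "F2 = F \<inter> famUN G N \<H>"
  define A where "A = \<Inter>F1"
  define C where "C = carrier G \<inter> \<Inter>F2"
  have F1ne: "F1 \<noteq> {}" using False F1_def by simp
  have sg: "\<And>H. H \<in> \<H> \<Longrightarrow> subgroup H G \<and> H \<noteq> carrier G"
    using PS unfolding proper_subgroup_family_def by blast
  have F1p: "\<And>H. H \<in> F1 \<Longrightarrow> subgroup H G \<and> N \<subseteq> H"
    using SD sg F(3) unfolding F1_def strongly_divided_by_def by blast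
  have As: "subgroup A G" unfolding A_def using F1p F1ne by (intro subgroups_Inter) auto
  have NA: "N \<subseteq> A" unfolding A_def using F1p by blast
  have Cmul: "C <#> N = carrier G"
  proof (cases "F2 = {}")
    case True
    thus ?thesis unfolding C_def using carrier_mult_sub[OF N] by simp
  next
    case False
    have "F2 \<subseteq> famUN G N \<H>" unfolding F2_def by blast
    moreover have "finite F2" unfolding F2_def using F(1) by simp
    moreover have "\<Inter>F2 \<subseteq> carrier G"
      using False F(3) sg subgroup.subset unfolding F2_def by blast
    ultimately show ?thesis unfolding C_def using SD False
      unfolding strongly_divided_by_def by (simp add: Int_absorb1)
  qed
  have Cs: "subgroup C G"
  proof (cases "F2 = {}")
    case True thus ?thesis unfolding C_def using subgroup_self by simp
  next
    case False
    have "\<Inter>F2 \<subseteq> carrier G"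
      using False F(3) sg subgroup.subset unfolding F2_def by blast
    hence "C = \<Inter>F2" unfolding C_def by blast
    moreover have "subgroup (\<Inter>F2) G"
    proof (rule subgroups_Inter)
      show "\<And>H. H \<in> F2 \<Longrightarrow> subgroup H G" using F(3) sg unfolding F2_def by blast
    qed (use False in simp)
    ultimately show ?thesis by simp
  qed
  have FF: "F = F1 \<union> F2" using F(3) unfolding F1_def F2_def famN_def famUN_def by blast
  have Fsub: "\<Inter>F \<subseteq> carrier G"
    using F(2,3) sg subgroup.subset by blast
  have XA: "\<Inter>F = A \<inter> C" using Fsub unfolding FF A_def C_def by blast
  have e1: "(\<Inter>F) <#> N = A" unfolding XA using keyA[OF As NA N Cs Cmul] .
  obtain H1 where H1: "H1 \<in> F1" using F1ne by blast
  have "A \<subseteq> H1" unfolding A_def using H1 by blast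
  moreover have "H1 \<subseteq> carrier G" "H1 \<noteq> carrier G" using H1 F(3) sg subgroup.subset
    unfolding F1_def by blast+
  ultimately have "A \<noteq> carrier G" by blast
  moreover have "bar G N (\<Inter>F) = \<Inter>(bar G N ` F1)"
    using XA keyB[OF As NA N Cs Cmul] keyC[OF F1ne F1p N] unfolding A_def by simp
  ultimately show ?thesis using e1 F1ne NA unfolding F1_def[symmetric] A_def by auto
qed

lemma fin_intersI: "finite F \<Longrightarrow> F \<noteq> {} \<Longrightarrow> F \<subseteq> K \<Longrightarrow> \<Inter>F \<in> fin_inters K"
  unfolding fin_inters_def by blast

lemma (in group) main_aux:
  assumes "N \<lhd> G"
    and "proper_subgroup_family G \<H>"
    and "strongly_divided_by G N \<H>"
  shows "proper_subgroup_family G (fin_inters \<H>)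
    \<and> divided_by G N (fin_inters \<H>)
    \<and> famUN G N (fin_inters \<H>) = fin_inters (famUN G N \<H>)
    \<and> bar_fam G N (fin_inters \<H>) = fin_inters (bar_fam G N \<H>)"
proof -
  have N: "subgroup N G" using assms(1) normal_imp_subgroup by blast
  note PS = assms(2) and SD = assms(3)
  have sg: "\<And>H. H \<in> \<H> \<Longrightarrow> subgroup H G \<and> H \<noteq> carrier G"
    using PS unfolding proper_subgroup_family_def by blast
  note dec = decomp[OF N PS SD]
  have P1: "proper_subgroup_family G (fin_inters \<H>)"
    unfolding proper_subgroup_family_def
  proof
    fix Z assume "Z \<in> fin_inters \<H>"
    then obtain F where F: "Z = \<Inter>F" "finite F" "F \<noteq> {}" "F \<subseteq> \<H>"
      unfolding fin_inters_def by blast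
    have "subgroup Z G" unfolding F(1) using F sg by (intro subgroups_Inter) auto
    moreover obtain H where H: "H \<in> F" using F by blast
    have "H \<subseteq> carrier G" "H \<noteq> carrier G" using H F(4) sg subgroup.subset by blast+
    moreover have "Z \<subseteq> H" using H F(1) by blast
    ultimately show "subgroup Z G \<and> Z \<noteq> carrier G" by blast
  qed
  have P3: "famUN G N (fin_inters \<H>) = fin_inters (famUN G N \<H>)"
  proof
    show "famUN G N (fin_inters \<H>) \<subseteq> fin_inters (famUN G N \<H>)"
    proof
      fix Z assume Z: "Z \<in> famUN G N (fin_inters \<H>)"
      then obtain F where F: "Z = \<Inter>F" "finite F" "F \<noteq> {}" "F \<subseteq> \<H>"
        unfolding famUN_def fin_inters_def by blast
      have "Z <#> N = carrier G" using Z unfolding famUN_def by blast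
      hence "F \<subseteq> famUN G N \<H>" using dec[OF F(2,3,4)] F(1) by blast
      thus "Z \<in> fin_inters (famUN G N \<H>)" using F unfolding fin_inters_def by blast
    qed
    show "fin_inters (famUN G N \<H>) \<subseteq> famUN G N (fin_inters \<H>)"
    proof
      fix Z assume "Z \<in> fin_inters (famUN G N \<H>)"
      then obtain F where F: "Z = \<Inter>F" "finite F" "F \<noteq> {}" "F \<subseteq> famUN G N \<H>"
        unfolding fin_inters_def by blast
      have "Z <#> N = carrier G" using SD F unfolding strongly_divided_by_def by blast
      moreover have "F \<subseteq> \<H>" using F(4) unfolding famUN_def by blast
      ultimately show "Z \<in> famUN G N (fin_inters \<H>)"
        using F unfolding famUN_def fin_inters_def by blast
    qed
  qed
  have famN_dec: "\<And>Z. Z \<in> famN G N (fin_inters \<H>) \<Longrightarrow> \<exists>F1. finite F1 \<and> F1 \<noteq> {}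
      \<and> F1 \<subseteq> famN G N \<H> \<and> Z <#> N = \<Inter>F1 \<and> bar G N Z = \<Inter>(bar G N ` F1)"
  proof -
    fix Z assume Z: "Z \<in> famN G N (fin_inters \<H>)"
    then obtain F where F: "Z = \<Inter>F" "finite F" "F \<noteq> {}" "F \<subseteq> \<H>"
      unfolding famN_def fin_inters_def by blast
    have "Z <#> N \<noteq> carrier G" using Z unfolding famN_def by blast
    hence D: "F \<inter> famN G N \<H> \<noteq> {} \<and> (\<Inter>F) <#> N = \<Inter>(F \<inter> famN G N \<H>)
     \<and> bar G N (\<Inter>F) = \<Inter>(bar G N ` (F \<inter> famN G N \<H>))"
      using dec[OF F(2,3,4)] F(1) by blast
    show "?thesis Z"
      by (rule exI[of _ "F \<inter> famN G N \<H>"]) (use D F in auto)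
  qed
  have P2: "divided_by G N (fin_inters \<H>)"
    unfolding divided_by_def
  proof (intro conjI ballI)
    fix Z assume Z: "Z \<in> famN G N (fin_inters \<H>)"
    obtain F1 where F1: "finite F1" "F1 \<noteq> {}" "F1 \<subseteq> famN G N \<H>" "Z <#> N = \<Inter>F1"
      using famN_dec[OF Z] by blast
    have "F1 \<subseteq> \<H>" using F1(3) unfolding famN_def by blast
    thus "Z <#> N \<in> fin_inters \<H>" unfolding F1(4) using F1(1,2) by (rule fin_intersI[rotated 2])
  next
    fix Z K assume Z: "Z \<in> famN G N (fin_inters \<H>)" and K: "K \<in> famUN G N (fin_inters \<H>)"
    obtain F1 where F1: "finite F1" "F1 \<noteq> {}" "F1 \<subseteq> famN G N \<H>" "Z <#> N = \<Inter>F1"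
      using famN_dec[OF Z] by blast
    have "K \<in> fin_inters (famUN G N \<H>)" using K P3 by simp
    then obtain F2 where F2: "K = \<Inter>F2" "finite F2" "F2 \<noteq> {}" "F2 \<subseteq> famUN G N \<H>"
      unfolding fin_inters_def by blast
    have "(Z <#> N) \<inter> K = \<Inter>(F1 \<union> F2)" using F1(4) F2(1) by auto
    moreover have "F1 \<union> F2 \<subseteq> \<H>" using F1(3) F2(4) unfolding famN_def famUN_def by blast
    moreover have "\<Inter>(F1 \<union> F2) \<in> fin_inters \<H>"
      using calculation(2) F1(1,2) F2(2) by (intro fin_intersI) auto
    ultimately show "(Z <#> N) \<inter> K \<in> fin_inters \<H>" by simp
  qed
  have P4: "bar_fam G N (fin_inters \<H>) = fin_inters (bar_fam G N \<H>)"
  proof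
    show "bar_fam G N (fin_inters \<H>) \<subseteq> fin_inters (bar_fam G N \<H>)"
    proof
      fix Y assume "Y \<in> bar_fam G N (fin_inters \<H>)"
      then obtain Z where Z: "Z \<in> famN G N (fin_inters \<H>)" "Y = bar G N Z"
        unfolding bar_fam_def by blast
        obtain F1 where F1: "finite F1" "F1 \<noteq> {}" "F1 \<subseteq> famN G N \<H>"
        "bar G N Z = \<Inter>(bar G N ` F1)"
        using famN_dec[OF Z(1)] by blast
      have "bar G N ` F1 \<subseteq> bar_fam G N \<H>" using F1(3) unfolding bar_fam_def by blast
      moreover have "\<Inter>(bar G N ` F1) \<in> fin_inters (bar_fam G N \<H>)"
        using calculation F1(1,2) by (intro fin_intersI) auto
      ultimately show "Y \<in> fin_inters (bar_fam G N \<H>)" using F1(4) Z(2) by simp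
    qed
    show "fin_inters (bar_fam G N \<H>) \<subseteq> bar_fam G N (fin_inters \<H>)"
    proof
      fix Y assume "Y \<in> fin_inters (bar_fam G N \<H>)"
      then obtain S where S: "Y = \<Inter>S" "finite S" "S \<noteq> {}" "S \<subseteq> bar G N ` famN G N \<H>"
        unfolding fin_inters_def bar_fam_def by blast
      then obtain F1 where F1: "F1 \<subseteq> famN G N \<H>" "finite F1" "S = bar G N ` F1"
        by (meson finite_subset_image)
      have F1ne: "F1 \<noteq> {}" using S(3) F1(3) by blast
      have F1H: "F1 \<subseteq> \<H>" using F1(1) unfolding famN_def by blast
      have "finite F1 \<and> F1 \<noteq> {} \<and> F1 \<subseteq> \<H>" using F1 F1ne F1H by blast
      hence D: "(F1 \<subseteq> famUN G N \<H> \<and> (\<Inter>F1) <#> N = carrier G) \<or>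
        (F1 \<inter> famN G N \<H> \<noteq> {} \<and> (\<Inter>F1) <#> N = \<Inter>(F1 \<inter> famN G N \<H>)
         \<and> (\<Inter>F1) <#> N \<noteq> carrier G
         \<and> bar G N (\<Inter>F1) = \<Inter>(bar G N ` (F1 \<inter> famN G N \<H>))
         \<and> N \<subseteq> \<Inter>(F1 \<inter> famN G N \<H>))" using dec[of F1] by blast
      have FI: "F1 \<inter> famN G N \<H> = F1" using F1(1) by blast
      have nU: "\<not> F1 \<subseteq> famUN G N \<H>" using F1(1) F1ne unfolding famN_def famUN_def by blast
      have D2: "(\<Inter>F1) <#> N \<noteq> carrier G" "bar G N (\<Inter>F1) = \<Inter>(bar G N ` F1)"
        using D nU unfolding FI by blast+
      have "\<Inter>F1 \<in> fin_inters \<H>" using F1(2) F1ne F1H by (rule fin_intersI)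
      hence "\<Inter>F1 \<in> famN G N (fin_inters \<H>)" using D2(1) unfolding famN_def by blast
      hence "bar G N (\<Inter>F1) \<in> bar_fam G N (fin_inters \<H>)" unfolding bar_fam_def by blast
      thus "Y \<in> bar_fam G N (fin_inters \<H>)" using D2(2) S(1) F1(3) by simp
    qed
  qed
  show ?thesis using P1 P2 P3 P4 by blast
qed


theorem lemma3p18:
  fixes G :: "('a, 'b) monoid_scheme" and N :: "'a set" and \<H> :: "'a set set"
  assumes "group G"
    and "N \<lhd> G"
    and "proper_subgroup_family G \<H>"
    and "strongly_divided_by G N \<H>"
  shows "proper_subgroup_family G (fin_inters \<H>)
    \<and> divided_by G N (fin_inters \<H>)
    \<and> famUN G N (fin_inters \<H>) = fin_inters (famUN G N \<H>)
    \<and> bar_fam G N (fin_inters \<H>) = fin_inters (bar_fam G N \<H>)"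
  using group.main_aux[OF assms] .
end
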